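(* In the setting where $\mathbf X = (X_1,\ldots,X_d)$ has continuous margins $F_1,\ldots,F_d$, $\mathbf Y = (1/\{1-F_j(X_j)\})_{j}$ satisfies $t\Pr[\mathbf Y/t\in\cdot\,]\to\mu$ vaguely on $[0,\infty]^d\setminus\{\mathbf 0\}$ with $\mu$ homogeneous of order $-1$, and $H$ is the spectral measure $H(B) = \mu(\{\mathbf y : y_1+\cdots+y_d > 1, \mathbf y/(y_1+\cdots+y_d)\in B\})$, define $N(t) = \sum_{j=1}^d \mathbf 1\{F_j(X_j) > 1 - 1/t\}$. Then for $k = 1,\ldots,d$, \[ \lim_{t\to\infty} t\,\Pr[N(t) \ge k] = \int_{\Delta_{d-1}} w_{(d-k+1)}\, H(\mathrm d\mathbf w), \] where $w_{(1)} \le \cdots \le w_{(d)}$ are the order statistics of $(w_1,\ldots,w_d)$. In particular $\lim_t t\Pr[N(t)\ge 1] = \int \max_j w_j\,H(\mathrm d\mathbf w)$, $\lim_t t\Pr[N(t) = d] = \int \min_j w_j\,H(\mathrm d\mathbf w)$, and for $k = 1,\ldots,d-1$, \[ \lim_{t\to\infty} \mathbb E[N(t) - k \mid N(t)\ge k] = \frac{\int (w_{(1)} + \cdots + w_{(d-k)})\,H(\mathrm d\mathbf w)}{\int w_{(d-k+1)}\,H(\mathrm d\mathbf w)}. \]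
   Context: $\Delta_{d-1} = \{\mathbf w\in[0,1]^d : w_1+\cdots+w_d = 1\}$. Homogeneity of order $-1$: $\mu(a\,\cdot) = a^{-1}\mu(\cdot)$ for $a>0$. *)

theory Defs
  imports "HOL-Analysis.Analysis" "HOL-Probability.Probability"
begin

definition ord_stat :: "('d::finite \<Rightarrow> real) \<Rightarrow> nat \<Rightarrow> real" where
  "ord_stat w k = sorted_list_of_multiset (image_mset w (mset_set (UNIV :: 'd set))) ! (k - 1)"

text \<open>Here nu t f stands for the integral of f against the t-th measure.\<close>
definition vague_conv_E ::
  "(real \<Rightarrow> (('d::finite \<Rightarrow> ennreal) \<Rightarrow> real) \<Rightarrow> real) \<Rightarrow> ('d \<Rightarrow> ennreal) measure \<Rightarrow> bool" where
  "vague_conv_E nu mu \<longleftrightarrow>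
     (\<forall>f :: ('d \<Rightarrow> ennreal) \<Rightarrow> real.
        continuous_on (- {\<lambda>_. 0}) f \<and>
        (\<exists>K. compact K \<and> (\<lambda>_. 0) \<notin> K \<and> (\<forall>y. y \<notin> K \<longrightarrow> f y = 0))
        \<longrightarrow> ((\<lambda>t. nu t f) \<longlongrightarrow> integral\<^sup>L mu f) at_top)"

definition exponent_measure :: "('d::finite \<Rightarrow> ennreal) measure \<Rightarrow> bool" where
  "exponent_measure mu \<longleftrightarrow>
     sets mu = sets borel \<and>
     emeasure mu {\<lambda>_. 0} = 0 \<and>
     (\<forall>K. compact K \<and> (\<lambda>_. 0) \<notin> K \<longrightarrow> emeasure mu K < \<infinity>) \<and>
     (\<forall>a::real. a > 0 \<longrightarrow> (\<forall>B \<in> sets mu.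
        emeasure mu ((\<lambda>y. \<lambda>j. ennreal a * y j) ` B) = emeasure mu B / ennreal a))"

definition spectral_measure_of ::
  "('d::finite \<Rightarrow> ennreal) measure \<Rightarrow> ('d \<Rightarrow> real) measure \<Rightarrow> bool" where
  "spectral_measure_of mu H \<longleftrightarrow>
     sets H = sets borel \<and>
     (\<forall>B \<in> sets borel. emeasure H B =
        emeasure mu {y \<in> space mu. 1 < (\<Sum>j\<in>UNIV. y j) \<and>
                        (\<lambda>j. enn2real (y j / (\<Sum>i\<in>UNIV. y i))) \<in> B})"

end

theory Submission
  imports Defs
begin


lemma sorted_nth_gt_iff:
  fixes xs :: "real list"
  assumes s: "sorted xs" and l: "length xs = d" and k: "1 \<le> k" "k \<le> d"
  shows "c < xs ! (d - k) \<longleftrightarrow> k \<le> length (filter (\<lambda>x. c < x) xs)"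
proof -
  have eq: "length (filter (\<lambda>x. c < x) xs) = card {i. i < d \<and> c < xs ! i}"
    by (simp add: length_filter_conv_card l)
  show ?thesis
  proof
    assume c: "c < xs ! (d - k)"
    have "{d-k..<d} \<subseteq> {i. i < d \<and> c < xs ! i}"
    proof
      fix i assume "i \<in> {d-k..<d}"
      then have "xs ! (d-k) \<le> xs ! i" using s l by (auto intro: sorted_nth_mono)
      with c \<open>i \<in> _\<close> show "i \<in> {i. i < d \<and> c < xs ! i}" by auto
    qed
    from card_mono[OF _ this] have "card {d-k..<d} \<le> card {i. i < d \<and> c < xs ! i}" by auto
    then show "k \<le> length (filter (\<lambda>x. c < x) xs)" using eq k by simp
  next
    assume h: "k \<le> length (filter (\<lambda>x. c < x) xs)"
    show "c < xs ! (d - k)"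
    proof (rule ccontr)
      assume "\<not> c < xs ! (d - k)"
      then have c: "xs ! (d-k) \<le> c" by simp
      have "{i. i < d \<and> c < xs ! i} \<subseteq> {d-k+1..<d}"
      proof
        fix i assume i: "i \<in> {i. i < d \<and> c < xs ! i}"
        have "\<not> i \<le> d - k"
        proof
          assume "i \<le> d - k"
          then have "xs ! i \<le> xs ! (d-k)" using s l k by (auto intro: sorted_nth_mono)
          with c i show False by auto
        qed
        with i show "i \<in> {d-k+1..<d}" by auto
      qed
      from card_mono[OF _ this] have "card {i. i < d \<and> c < xs ! i} \<le> k - 1" using k by auto
      with h eq k show False by simp
    qed
  qed
qed

lemma ord_stat_list:
  fixes w :: "'d::finite \<Rightarrow> real"
  defines "xs \<equiv> sorted_list_of_multiset (image_mset w (mset_set (UNIV :: 'd set)))"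
  shows "sorted xs" "length xs = CARD('d)"
    "\<And>P. length (filter P xs) = card {j. P (w j)}"
proof -
  show "sorted xs" unfolding xs_def by simp
  have m: "mset xs = image_mset w (mset_set UNIV)" unfolding xs_def by simp
  show "length xs = CARD('d)" by (metis m size_image_mset size_mset size_mset_set)
  fix P
  have "mset (filter P xs) = image_mset w (mset_set {j. P (w j)})"
    by (simp add: m filter_mset_image_mset filter_mset_mset_set)
  then show "length (filter P xs) = card {j. P (w j)}"
    by (metis size_image_mset size_mset size_mset_set)
qed

lemma ord_stat_gt_iff:
  fixes w :: "'d::finite \<Rightarrow> real"
  assumes "1 \<le> k" "k \<le> CARD('d)"
  shows "c < ord_stat w (CARD('d) - k + 1) \<longleftrightarrow> k \<le> card {j. c < w j}"
proof -
  define xs where "xs = sorted_list_of_multiset (image_mset w (mset_set (UNIV :: 'd set)))"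
  have "ord_stat w (CARD('d) - k + 1) = xs ! (CARD('d) - k)"
    unfolding ord_stat_def xs_def by simp
  moreover note ord_stat_list[where w=w, folded xs_def]
  ultimately show ?thesis using sorted_nth_gt_iff[of xs "CARD('d)" k c] assms by simp
qed

lemma real_eq_by_gt: fixes a b :: real assumes "\<And>c. c < a \<longleftrightarrow> c < b" shows "a = b"
  by (metis assms linorder_neqE_linordered_idom order.irrefl)

lemma card_as_sum: "real (card {j::'d::finite. P j}) = (\<Sum>j\<in>UNIV. if P j then 1 else 0)"
  by (simp add: sum.If_cases)

lemma meas_card:
  assumes "\<And>j::'d::finite. Measurable.pred M (P j)"
  shows "Measurable.pred M (\<lambda>x. k \<le> card {j. P j x})"
proof -
  have "(\<lambda>x. real (card {j. P j x})) \<in> borel_measurable M"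
    unfolding card_as_sum using assms by measurable
  then have "Measurable.pred M (\<lambda>x. real k \<le> real (card {j. P j x}))" by measurable
  then show ?thesis by simp
qed

lemma ord_stat_measurable:
  assumes "1 \<le> m" "m \<le> CARD('d)"
  shows "(\<lambda>w::'d::finite \<Rightarrow> real. ord_stat w m) \<in> borel_measurable borel"
proof (rule borel_measurable_iff_greater[THEN iffD2], intro allI)
  fix c
  have m: "m = CARD('d) - (CARD('d) - m + 1) + 1" using assms by simp
  have "{w::'d \<Rightarrow> real. c < ord_stat w m} = {w. (CARD('d) - m + 1) \<le> card {j. c < w j}}"
    by (subst m, subst ord_stat_gt_iff) (use assms in auto)
  also have "\<dots> \<in> sets borel"
    using meas_card[where M=borel and P="\<lambda>j w. c < w j" and k="CARD('d) - m + 1"] by (simp add: pred_def)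
  finally show "{w::'d\<Rightarrow>real \<in> space borel. c < ord_stat w m} \<in> sets borel" by simp
qed

lemma ord_stat_max: "ord_stat w CARD('d) = Max (range (w::'d::finite \<Rightarrow> real))"
proof (rule real_eq_by_gt)
  fix c
  have "c < ord_stat w (CARD('d) - 1 + 1) \<longleftrightarrow> 1 \<le> card {j. c < w j}"
    by (rule ord_stat_gt_iff) auto
  also have "\<dots> \<longleftrightarrow> (\<exists>j. c < w j)" by (auto simp: Suc_le_eq card_gt_0_iff)
  also have "\<dots> \<longleftrightarrow> c < Max (range w)" by (auto simp: Max_gr_iff)
  finally show "c < ord_stat w CARD('d) \<longleftrightarrow> c < Max (range w)" by simp
qed

lemma ord_stat_min: "ord_stat w 1 = Min (range (w::'d::finite \<Rightarrow> real))"
proof (rule real_eq_by_gt)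
  fix c
  have "c < ord_stat w (CARD('d) - CARD('d) + 1) \<longleftrightarrow> CARD('d) \<le> card {j. c < w j}"
    by (rule ord_stat_gt_iff) auto
  also have "\<dots> \<longleftrightarrow> {j. c < w j} = UNIV"
    by (metis card_seteq finite top_greatest card_mono order_antisym top.extremum)
  also have "\<dots> \<longleftrightarrow> c < Min (range w)" by (auto simp: Min_gr_iff)
  finally show "c < ord_stat w 1 \<longleftrightarrow> c < Min (range w)" by simp
qed
lemma compact_UNIV_fun: "compact (UNIV :: ('d::finite \<Rightarrow> ennreal) set)"
proof -
  have "compact_space (product_topology (\<lambda>i::'d. (euclidean::ennreal topology)) UNIV)"
    unfolding compact_space_product_topology
    by (auto simp: compact_space_def compact_UNIV)
  then show ?thesis
    by (simp add: euclidean_product_topology compact_space_def)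
qed

lemma card_ge_iff: "k \<le> card {j::'d::finite. P j} \<longleftrightarrow> (\<exists>S. card S = k \<and> (\<forall>j\<in>S. P j))"
proof
  assume "k \<le> card {j. P j}"
  then obtain S where "S \<subseteq> {j. P j}" "card S = k" using obtain_subset_with_card_n by blast
  then show "\<exists>S. card S = k \<and> (\<forall>j\<in>S. P j)" by auto
next
  assume "\<exists>S. card S = k \<and> (\<forall>j\<in>S. P j)"
  then obtain S where "card S = k" "\<forall>j\<in>S. P j" by blast
  then show "k \<le> card {j. P j}" by (metis card_mono finite mem_Collect_eq subsetI)
qed

lemma cnt_set_eq: "{y. k \<le> card {j::'d::finite. P j y}} = (\<Union>S\<in>{S. card S = k}. \<Inter>j\<in>S. {y. P j y})"
  by (auto simp: card_ge_iff)

lemma closed_cnt: "closed {y::'d::finite \<Rightarrow> ennreal. k \<le> card {j. c \<le> y j}}"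
  unfolding cnt_set_eq[where P="\<lambda>j y. c \<le> y j"]
  by (intro closed_UN ballI closed_INT closed_Collect_le continuous_on_const continuous_on_product_coordinates) auto

lemma open_cnt: "open {y::'d::finite \<Rightarrow> ennreal. k \<le> card {j. c < y j}}"
  unfolding cnt_set_eq[where P="\<lambda>j y. c < y j"]
  by (intro open_UN ballI open_INT open_Collect_less continuous_on_const continuous_on_product_coordinates) auto

lemma compact_cnt: "compact {y::'d::finite \<Rightarrow> ennreal. k \<le> card {j. c \<le> y j}}"
  using closed_Int_compact[OF closed_cnt compact_UNIV_fun] by simp

lemma cont_enn2real_min: "continuous_on UNIV (\<lambda>x::ennreal. enn2real (min x (ennreal b)))"
proof -
  have "isCont (\<lambda>x::ennreal. enn2real (min x (ennreal b))) x0" for x0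
  proof -
    have fin: "min x0 (ennreal b) = ennreal (enn2real (min x0 (ennreal b)))"
    proof -
      have "min x0 (ennreal b) \<noteq> top" by (metis ennreal_neq_top min.absorb_iff2 min.cobounded2 top.extremum_uniqueI)
      then show ?thesis by (simp add: ennreal_enn2real_if)
    qed
    have "((\<lambda>x. min x (ennreal b)) \<longlongrightarrow> min x0 (ennreal b)) (at x0)"
      by (intro tendsto_intros)
    then have "((\<lambda>x. min x (ennreal b)) \<longlongrightarrow> ennreal (enn2real (min x0 (ennreal b)))) (at x0)"
      using fin by simp
    from tendsto_enn2real[OF this] show ?thesis unfolding isCont_def by simp
  qed
  then show ?thesis by (simp add: continuous_at_imp_continuous_on)
qed
definition hfun :: "real \<Rightarrow> real \<Rightarrow> ennreal \<Rightarrow> real" where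
  "hfun a b x = max 0 (min 1 ((enn2real (min x (ennreal b)) - a) / (b - a)))"

definition Ufun :: "nat \<Rightarrow> real \<Rightarrow> real \<Rightarrow> ('d::finite \<Rightarrow> ennreal) \<Rightarrow> real" where
  "Ufun k a b y = min 1 (\<Sum>S\<in>{S. card S = k}. \<Prod>j\<in>S. hfun a b (y j))"

lemma hfun_bounds: "0 \<le> hfun a b x" "hfun a b x \<le> 1"
  unfolding hfun_def by auto

lemma hfun_one: assumes "0 \<le> a" "a < b" "ennreal b \<le> x" shows "hfun a b x = 1"
proof -
  have "min x (ennreal b) = ennreal b" using assms by simp
  then show ?thesis using assms unfolding hfun_def by simp
qed

lemma hfun_nz: assumes "0 \<le> a" "a < b" "hfun a b x \<noteq> 0" shows "ennreal a < x"
proof (rule ccontr)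
  assume "\<not> ennreal a < x"
  then have "min x (ennreal b) \<le> ennreal a" by (simp add: min.coboundedI1)
  then have "enn2real (min x (ennreal b)) \<le> a"
    using assms by (metis enn2real_ennreal enn2real_mono ennreal_less_top)
  then have "(enn2real (min x (ennreal b)) - a) / (b - a) \<le> 0"
    using assms by (simp add: divide_nonpos_pos)
  then show False using assms(3) unfolding hfun_def by simp
qed

lemma hfun_cont: "continuous_on UNIV (hfun a b)"
  unfolding hfun_def divide_inverse
  by (intro continuous_on_max continuous_on_min continuous_on_const continuous_on_mult
      continuous_on_diff cont_enn2real_min)

lemma Ufun_bounds: "0 \<le> Ufun k a b y" "Ufun k a b y \<le> 1"
  unfolding Ufun_def using hfun_bounds by (auto intro!: sum_nonneg prod_nonneg)

lemma Ufun_one: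
  assumes "0 \<le> a" "a < b" "k \<le> card {j::'d::finite. ennreal b \<le> y j}"
  shows "Ufun k a b y = 1"
proof -
  obtain S :: "'d set" where S: "card S = k" "\<forall>j\<in>S. ennreal b \<le> y j"
    using assms(3) card_ge_iff by blast
  have "(\<Prod>j\<in>S. hfun a b (y j)) = 1" using S assms hfun_one by simp
  moreover have "(\<Prod>j\<in>S. hfun a b (y j)) \<le> (\<Sum>S\<in>{S. card S = k}. \<Prod>j\<in>S. hfun a b (y j))"
    by (rule member_le_sum) (use S hfun_bounds in \<open>auto intro!: prod_nonneg\<close>)
  ultimately show ?thesis unfolding Ufun_def by simp
qed

lemma Ufun_nz:
  assumes "0 \<le> a" "a < b" "Ufun k a b y \<noteq> 0"
  shows "k \<le> card {j::'d::finite. ennreal a < y j}"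
proof -
  have "(\<Sum>S\<in>{S. card S = k}. \<Prod>j\<in>S. hfun a b (y j)) \<noteq> 0"
    using assms(3) unfolding Ufun_def by auto
  then obtain S :: "'d set" where S: "card S = k" "(\<Prod>j\<in>S. hfun a b (y j)) \<noteq> 0"
    by (metis (mono_tags, lifting) mem_Collect_eq sum.neutral)
  then have "\<forall>j\<in>S. ennreal a < y j" using hfun_nz[OF assms(1,2)] by auto
  with S show ?thesis using card_ge_iff by blast
qed

lemma Ufun_cont: "continuous_on UNIV (Ufun k a b :: ('d::finite \<Rightarrow> ennreal) \<Rightarrow> real)"
  unfolding Ufun_def
  by (intro continuous_on_min continuous_on_const continuous_on_sum continuous_on_prod
      continuous_on_compose2[OF hfun_cont continuous_on_product_coordinates]) auto

lemma Ufun_meas: "Ufun k a b \<in> borel_measurable borel"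
  by (rule borel_measurable_continuous_onI[OF Ufun_cont])
lemma ennreal_mult_less_cancel: assumes a: "0 < a" shows "(ennreal a * x < ennreal a * z) = (x < z)"
proof
  show "x < z" if "ennreal a * x < ennreal a * z" using that
    by (metis linorder_not_less mult_left_mono zero_le)
  show "ennreal a * x < ennreal a * z" if "x < z"
    using a that by (intro ennreal_mult_strict_left_mono) auto
qed

lemma scale_inv: assumes "0 < a" shows "(\<lambda>j. ennreal a * (ennreal (1/a) * y j)) = y"
proof -
  have "ennreal a * ennreal (1/a) = 1" using assms by (simp flip: ennreal_mult)
  then show ?thesis by (simp flip: mult.assoc)
qed

lemma image_scale:
  assumes "0 < a" "\<And>y. Q' (\<lambda>j. ennreal a * y j) \<longleftrightarrow> Q y"
  shows "{y. Q' y} = (\<lambda>y j. ennreal a * y j) ` {y::'d \<Rightarrow> ennreal. Q y}"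
proof
  show "(\<lambda>y j. ennreal a * y j) ` {y. Q y} \<subseteq> {y. Q' y}" using assms by auto
  show "{y. Q' y} \<subseteq> (\<lambda>y j. ennreal a * y j) ` {y. Q y}"
  proof
    fix y assume "y \<in> {y. Q' y}"
    then have "Q' (\<lambda>j. ennreal a * (ennreal (1/a) * y j))" using scale_inv[OF assms(1), of y] by simp
    then have "Q (\<lambda>j. ennreal (1/a) * y j)" using assms(2) by blast
    then have "(\<lambda>j. ennreal a * (ennreal (1/a) * y j)) \<in> (\<lambda>y j. ennreal a * y j) ` {y. Q y}"
      by (intro image_eqI[where x="\<lambda>j. ennreal (1/a) * y j"]) auto
    then show "y \<in> (\<lambda>y j. ennreal a * y j) ` {y. Q y}"
      using scale_inv[OF assms(1), of y] by simp
  qed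
qed

lemma expm_space: "exponent_measure mu \<Longrightarrow> space mu = UNIV"
  unfolding exponent_measure_def by (metis sets_eq_imp_space_eq space_borel)

lemma expm_scale:
  assumes mu: "exponent_measure mu" and a: "0 < a" and Q: "{y. Q y} \<in> sets borel"
    and eq: "\<And>y. Q' (\<lambda>j. ennreal a * y j) \<longleftrightarrow> Q y"
  shows "emeasure mu {y. Q' y} = emeasure mu {y::'d::finite \<Rightarrow> ennreal. Q y} / ennreal a"
proof -
  have "emeasure mu ((\<lambda>y j. ennreal a * y j) ` {y. Q y}) = emeasure mu {y. Q y} / ennreal a"
    using mu a Q unfolding exponent_measure_def by auto
  then show ?thesis using image_scale[of a Q' Q, OF a eq] by simp
qed

lemma expm_finite:
  assumes "exponent_measure mu" "compact K" "(\<lambda>_. 0) \<notin> K"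
  shows "emeasure mu K < \<infinity>"
  using assms unfolding exponent_measure_def by auto

definition Eset :: "nat \<Rightarrow> ennreal \<Rightarrow> ('d::finite \<Rightarrow> ennreal) set" where
  "Eset k c = {y. k \<le> card {j. c < y j}}"

lemma Eset_borel: "Eset k c \<in> sets borel"
  unfolding Eset_def by (rule borel_open[OF open_cnt])

lemma Eset_finite:
  assumes mu: "exponent_measure mu" and k: "1 \<le> k" and c: "0 < c"
  shows "emeasure mu (Eset k (ennreal c) :: ('d::finite \<Rightarrow> ennreal) set) < \<infinity>"
proof -
  let ?K = "{y::'d \<Rightarrow> ennreal. k \<le> card {j. ennreal c \<le> y j}}"
  have "Eset k (ennreal c) \<subseteq> ?K" unfolding Eset_def
  proof (intro subsetI, simp)
    fix y :: "'d \<Rightarrow> ennreal" assume "k \<le> card {j. ennreal c < y j}"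
    moreover have "card {j. ennreal c < y j} \<le> card {j. ennreal c \<le> y j}"
      by (rule card_mono) auto
    ultimately show "k \<le> card {j. ennreal c \<le> y j}" by simp
  qed
  moreover have "emeasure mu ?K < \<infinity>"
    using expm_finite[OF mu compact_cnt] k c by auto
  moreover have "?K \<in> sets mu" using mu borel_closed[OF closed_cnt] unfolding exponent_measure_def by auto
  ultimately show ?thesis using emeasure_mono[of "Eset k (ennreal c)" ?K mu] by simp
qed

lemma Eset_scale:
  assumes mu: "exponent_measure mu" and c: "0 < c"
  shows "emeasure mu (Eset k (ennreal c) :: ('d::finite \<Rightarrow> ennreal) set) = emeasure mu (Eset k 1) / ennreal c"
  unfolding Eset_def
proof (rule expm_scale[OF mu c])
  show "{y::'d\<Rightarrow>ennreal. k \<le> card {j. 1 < y j}} \<in> sets borel" using Eset_borel unfolding Eset_def by auto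
  fix y :: "'d \<Rightarrow> ennreal"
  have "\<And>j. (ennreal c < ennreal c * y j) = (1 < y j)"
    using ennreal_mult_less_cancel[OF c, of 1] by simp
  then show "k \<le> card {j. ennreal c < ennreal c * y j} \<longleftrightarrow> k \<le> card {j. 1 < y j}" by simp
qed



lemma Y_gt_iff:
  assumes "0 \<le> p" "p \<le> 1" "0 < t"
  shows "(1 < 1 / ennreal (1 - p) / ennreal t) \<longleftrightarrow> (1 - 1/t < p)"
proof (cases "p = 1")
  case True
  then show ?thesis using assms by (simp add: ennreal_divide_top divide_ennreal_def)
next
  case False
  then have q: "0 < 1 - p" using assms by simp
  have "1 / ennreal (1 - p) / ennreal t = ennreal (1 / (1 - p) / t)"
  proof -
    have "1 / ennreal (1 - p) = ennreal (1 / (1 - p))" using divide_ennreal[of 1 "1-p"] q by simp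
    then show ?thesis using divide_ennreal[of "1/(1-p)" t] q assms by simp
  qed
  moreover have "1 < 1 / (1 - p) / t \<longleftrightarrow> 1 - 1/t < p"
    using q assms by (simp add: field_simps)
  ultimately show ?thesis by simp
qed

lemma Y_meas:
  fixes X :: "'a \<Rightarrow> 'd \<Rightarrow> real"
  assumes "(\<lambda>\<omega>. X \<omega> j) \<in> borel_measurable M" "continuous_on UNIV (F j)"
  shows "(\<lambda>\<omega>. 1 / ennreal (1 - F j (X \<omega> j)) / ennreal t) \<in> borel_measurable M"
proof -
  have [measurable]: "F j \<in> borel_measurable borel" using assms(2) by (rule borel_measurable_continuous_onI)
  have [measurable]: "(\<lambda>\<omega>. X \<omega> j) \<in> borel_measurable M" by fact
  show ?thesis by measurable
qed
lemma squeeze_eps: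
  fixes f :: "real \<Rightarrow> real" and G :: real
  assumes H: "\<And>\<epsilon>. 0 < \<epsilon> \<Longrightarrow> \<epsilon> < 1 \<Longrightarrow>
     (\<forall>\<^sub>F t in at_top. f t \<le> G/(1-\<epsilon>) + \<epsilon>) \<and> (\<forall>\<^sub>F t in at_top. G/(1+\<epsilon>) - \<epsilon> \<le> f t)"
  shows "(f \<longlongrightarrow> G) at_top"
proof (rule order_tendstoI)
  have ev: "\<forall>\<^sub>F \<epsilon> in at_right (0::real). 0 < \<epsilon> \<and> \<epsilon> < 1"
    by (auto simp: eventually_at_right_field intro!: exI[of _ 1])
  fix y assume y: "G < y"
  have "((\<lambda>\<epsilon>. G/(1-\<epsilon>) + \<epsilon>) \<longlongrightarrow> G/(1-0) + 0) (at_right (0::real))"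
    by (intro tendsto_intros) auto
  then have "\<forall>\<^sub>F \<epsilon> in at_right (0::real). G/(1-\<epsilon>) + \<epsilon> < y"
    using y by (intro order_tendstoD) auto
  with ev have "\<forall>\<^sub>F \<epsilon> in at_right (0::real). (0 < \<epsilon> \<and> \<epsilon> < 1) \<and> G/(1-\<epsilon>) + \<epsilon> < y"
    by (rule eventually_conj)
  then have "\<exists>\<epsilon>. (0 < \<epsilon> \<and> \<epsilon> < 1) \<and> G/(1-\<epsilon>) + \<epsilon> < y"
    using eventually_happens trivial_limit_at_right_real by blast
  then obtain \<epsilon> where e: "0 < \<epsilon>" "\<epsilon> < 1" "G/(1-\<epsilon>) + \<epsilon> < y" by blast
  show "\<forall>\<^sub>F t in at_top. f t < y"
    using H[OF e(1,2)] e(3) by (auto elim: eventually_mono)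
next
  have ev: "\<forall>\<^sub>F \<epsilon> in at_right (0::real). 0 < \<epsilon> \<and> \<epsilon> < 1"
    by (auto simp: eventually_at_right_field intro!: exI[of _ 1])
  fix y assume y: "y < G"
  have "((\<lambda>\<epsilon>. G/(1+\<epsilon>) - \<epsilon>) \<longlongrightarrow> G/(1+0) - 0) (at_right (0::real))"
    by (intro tendsto_intros) auto
  then have "\<forall>\<^sub>F \<epsilon> in at_right (0::real). y < G/(1+\<epsilon>) - \<epsilon>"
    using y by (intro order_tendstoD) auto
  with ev have "\<forall>\<^sub>F \<epsilon> in at_right (0::real). (0 < \<epsilon> \<and> \<epsilon> < 1) \<and> y < G/(1+\<epsilon>) - \<epsilon>"
    by (rule eventually_conj)
  then have "\<exists>\<epsilon>. (0 < \<epsilon> \<and> \<epsilon> < 1) \<and> y < G/(1+\<epsilon>) - \<epsilon>"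
    using eventually_happens trivial_limit_at_right_real by blast
  then obtain \<epsilon> where e: "0 < \<epsilon>" "\<epsilon> < 1" "y < G/(1+\<epsilon>) - \<epsilon>" by blast
  show "\<forall>\<^sub>F t in at_top. y < f t"
    using H[OF e(1,2)] e(3) by (auto elim: eventually_mono)
qed


lemma measure_Eset_scale:
  assumes mu: "exponent_measure mu" and c: "0 < c"
  shows "measure mu (Eset k (ennreal c) :: ('d::finite \<Rightarrow> ennreal) set) = measure mu (Eset k 1) / c"
proof -
  have "measure mu (Eset k (ennreal c) :: ('d \<Rightarrow> ennreal) set) = enn2real (emeasure mu (Eset k 1) / ennreal c)"
    using Eset_scale[OF mu c] by (simp add: measure_def)
  also have "\<dots> = enn2real (emeasure mu (Eset k 1) * ennreal (1/c))"
    using c by (simp add: divide_ennreal_def inverse_ennreal inverse_eq_divide)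
  also have "\<dots> = measure mu (Eset k 1) / c"
    using c by (simp add: enn2real_mult measure_def)
  finally show ?thesis .
qed

lemma U_le_ind:
  assumes "0 < a" "a < b"
  shows "Ufun k a b y \<le> indicator (Eset k (ennreal a)) y"
proof (cases "Ufun k a b y = 0")
  case True then show ?thesis by simp
next
  case False
  then have "y \<in> Eset k (ennreal a)" using Ufun_nz[of a b k y] assms unfolding Eset_def by auto
  then show ?thesis using Ufun_bounds[of k a b y] by simp
qed

lemma U_ge_ind:
  assumes "0 \<le> a" "a < b"
  shows "indicator (Eset k (ennreal b)) y \<le> Ufun k a b y"
proof (cases "y \<in> Eset k (ennreal b)")
  case True
  then have "k \<le> card {j. ennreal b < y j}" unfolding Eset_def by simp
  also have "\<dots> \<le> card {j. ennreal b \<le> y j}" by (rule card_mono) auto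
  finally have "Ufun k a b y = 1" using Ufun_one assms by blast
  then show ?thesis by simp
next
  case False then show ?thesis using Ufun_bounds[of k a b y] by simp
qed

lemma U_integrable:
  assumes mu: "exponent_measure mu" and k: "1 \<le> k" and ab: "0 < a" "a < b"
  shows "integrable mu (Ufun k a b :: ('d::finite \<Rightarrow> ennreal) \<Rightarrow> real)"
proof (rule Bochner_Integration.integrable_bound[where f="indicator (Eset k (ennreal a)) :: ('d \<Rightarrow> ennreal) \<Rightarrow> real"])
  show "integrable mu (indicator (Eset k (ennreal a)) :: ('d \<Rightarrow> ennreal) \<Rightarrow> real)"
    using mu Eset_finite[OF mu k ab(1)] Eset_borel
    by (intro integrable_real_indicator) (auto simp: exponent_measure_def)
  show "Ufun k a b \<in> borel_measurable mu"
    using mu Ufun_meas unfolding exponent_measure_def by (simp cong: measurable_cong_sets)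
  show "AE y in mu. norm (Ufun k a b y) \<le> norm (indicator (Eset k (ennreal a)) y :: real)"
  proof (intro AE_I2)
    fix y
    have "\<bar>Ufun k a b y\<bar> = Ufun k a b y" using Ufun_bounds(1)[of k a b y] by simp
    then show "norm (Ufun k a b y) \<le> norm (indicator (Eset k (ennreal a)) y :: real)"
      using U_le_ind[OF ab, of k y] by simp
  qed
qed

lemma int_U_upper:
  assumes mu: "exponent_measure mu" and k: "1 \<le> k" and ab: "0 < a" "a < b"
  shows "integral\<^sup>L mu (Ufun k a b :: ('d::finite \<Rightarrow> ennreal) \<Rightarrow> real) \<le> measure mu (Eset k (ennreal a))"
proof -
  have "integral\<^sup>L mu (Ufun k a b :: ('d \<Rightarrow> ennreal) \<Rightarrow> real) \<le> integral\<^sup>L mu (indicator (Eset k (ennreal a)))"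
    using mu Eset_finite[OF mu k ab(1)] Eset_borel U_integrable[OF mu k ab] U_le_ind[OF ab]
    by (intro integral_mono integrable_real_indicator) (auto simp: exponent_measure_def)
  then show ?thesis using expm_space[OF mu] by simp
qed

lemma int_U_lower:
  assumes mu: "exponent_measure mu" and k: "1 \<le> k" and ab: "0 < a" "a < b"
  shows "measure mu (Eset k (ennreal b)) \<le> integral\<^sup>L mu (Ufun k a b :: ('d::finite \<Rightarrow> ennreal) \<Rightarrow> real)"
proof -
  have "integral\<^sup>L mu (indicator (Eset k (ennreal b))) \<le> integral\<^sup>L mu (Ufun k a b :: ('d \<Rightarrow> ennreal) \<Rightarrow> real)"
    using mu Eset_finite[OF mu k] ab Eset_borel U_integrable[OF mu k ab] U_ge_ind[of a b]
    by (intro integral_mono integrable_real_indicator) (auto simp: exponent_measure_def)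
  then show ?thesis using expm_space[OF mu] by simp
qed

lemma vague_U:
  assumes mu: "exponent_measure mu" and v: "vague_conv_E nu mu" and k: "1 \<le> k" and ab: "0 < a" "a < b"
  shows "((\<lambda>t. nu t (Ufun k a b)) \<longlongrightarrow> integral\<^sup>L mu (Ufun k a b :: ('d::finite \<Rightarrow> ennreal) \<Rightarrow> real)) at_top"
proof -
  let ?K = "{y::'d \<Rightarrow> ennreal. k \<le> card {j. ennreal a \<le> y j}}"
  have "compact ?K" by (rule compact_cnt)
  moreover have "(\<lambda>_. 0) \<notin> ?K" using k ab by simp
  moreover have "\<forall>y. y \<notin> ?K \<longrightarrow> Ufun k a b y = 0"
  proof (intro allI impI)
    fix y assume y: "y \<notin> ?K"
    show "Ufun k a b y = 0"
    proof (rule ccontr)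
      assume "Ufun k a b y \<noteq> 0"
      then have "k \<le> card {j. ennreal a < y j}" using Ufun_nz[of a b k y] ab by simp
      also have "\<dots> \<le> card {j. ennreal a \<le> y j}" by (rule card_mono) auto
      finally show False using y by simp
    qed
  qed
  moreover have "continuous_on (- {\<lambda>_. 0}) (Ufun k a b :: ('d \<Rightarrow> ennreal) \<Rightarrow> real)"
    using Ufun_cont continuous_on_subset by blast
  ultimately show ?thesis using v unfolding vague_conv_E_def by blast
qed

lemma conv_main:
  fixes M :: "'a measure" and Z :: "real \<Rightarrow> 'a \<Rightarrow> 'd::finite \<Rightarrow> ennreal"
  assumes prob: "prob_space M"
    and meas: "\<And>t j. (\<lambda>\<omega>. Z t \<omega> j) \<in> borel_measurable M"
    and mu: "exponent_measure mu"
    and v: "vague_conv_E (\<lambda>t f. t * integral\<^sup>L M (\<lambda>\<omega>. f (Z t \<omega>))) mu"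
    and k: "1 \<le> k"
  shows "((\<lambda>t. t * measure M {\<omega> \<in> space M. k \<le> card {j. 1 < Z t \<omega> j}}) \<longlongrightarrow> measure mu (Eset k 1 :: ('d \<Rightarrow> ennreal) set)) at_top"
proof -
  interpret prob_space M by (rule prob)
  define G where "G = measure mu (Eset k 1 :: ('d \<Rightarrow> ennreal) set)"
  define A where "A t = {\<omega> \<in> space M. k \<le> card {j. 1 < Z t \<omega> j}}" for t
  have Zm: "(\<lambda>\<omega>. Z t \<omega>) \<in> borel_measurable M" for t
    by (rule measurable_coordinatewise_then_product) (rule meas)
  have A_eq: "A t = (\<lambda>\<omega>. Z t \<omega>) -` Eset k 1 \<inter> space M" for t
    unfolding A_def Eset_def by auto
  have A_sets: "A t \<in> sets M" for t
    unfolding A_eq using Zm Eset_borel by (rule measurable_sets)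
  have ind_eq: "indicator (A t) \<omega> = (indicator (Eset k 1) (Z t \<omega>) :: real)" if "\<omega> \<in> space M" for t \<omega>
    using that unfolding A_eq by (simp add: indicator_def)
  have Uint: "integrable M (\<lambda>\<omega>. Ufun k a b (Z t \<omega>))" for a b t
  proof (rule integrable_const_bound[where B=1])
    show "AE \<omega> in M. norm (Ufun k a b (Z t \<omega>)) \<le> 1"
    proof (intro AE_I2)
      fix \<omega> show "norm (Ufun k a b (Z t \<omega>)) \<le> 1"
        using Ufun_bounds(1)[of k a b "Z t \<omega>"] Ufun_bounds(2)[of k a b "Z t \<omega>"] by simp
    qed
    show "(\<lambda>\<omega>. Ufun k a b (Z t \<omega>)) \<in> borel_measurable M"
      using Ufun_meas Zm by (rule measurable_compose[rotated])
  qed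
  have Iint: "integrable M (indicator (A t) :: 'a \<Rightarrow> real)" for t
    using A_sets by (intro integrable_real_indicator) (auto simp: less_top[symmetric])
  have Pint: "measure M (A t) = integral\<^sup>L M (indicator (A t))" for t
    using A_sets by simp
  show ?thesis
    unfolding A_def[symmetric] G_def[symmetric]
  proof (rule squeeze_eps)
    fix \<epsilon> :: real assume e: "0 < \<epsilon>" "\<epsilon> < 1"
    let ?u = "Ufun k (1-\<epsilon>) 1 :: ('d \<Rightarrow> ennreal) \<Rightarrow> real"
    have "((\<lambda>t. t * integral\<^sup>L M (\<lambda>\<omega>. ?u (Z t \<omega>))) \<longlongrightarrow> integral\<^sup>L mu ?u) at_top"
      using vague_U[OF mu v k, of "1-\<epsilon>" 1] e by simp
    then have ev1: "\<forall>\<^sub>F t in at_top. t * integral\<^sup>L M (\<lambda>\<omega>. ?u (Z t \<omega>)) < integral\<^sup>L mu ?u + \<epsilon>"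
      using e by (intro order_tendstoD) auto
    have Iu: "integral\<^sup>L mu ?u \<le> G/(1-\<epsilon>)"
      using int_U_upper[OF mu k, of "1-\<epsilon>" 1] e measure_Eset_scale[OF mu, of "1-\<epsilon>" k] unfolding G_def by simp
    have le1: "measure M (A t) \<le> integral\<^sup>L M (\<lambda>\<omega>. ?u (Z t \<omega>))" for t
      unfolding Pint using Iint Uint
    proof (intro integral_mono)
      fix \<omega> assume "\<omega> \<in> space M"
      then show "indicator (A t) \<omega> \<le> ?u (Z t \<omega>)"
        using ind_eq U_ge_ind[of "1-\<epsilon>" 1 k "Z t \<omega>"] e by simp
    qed
    have up: "\<forall>\<^sub>F t in at_top. t * measure M (A t) \<le> G/(1-\<epsilon>) + \<epsilon>"
      using ev1 eventually_ge_at_top[of 0]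
    proof eventually_elim
      case (elim t)
      then have "t * measure M (A t) \<le> t * integral\<^sup>L M (\<lambda>\<omega>. ?u (Z t \<omega>))"
        using le1 by (intro mult_left_mono) auto
      then show ?case using elim Iu by linarith
    qed
    let ?l = "Ufun k 1 (1+\<epsilon>) :: ('d \<Rightarrow> ennreal) \<Rightarrow> real"
    have "((\<lambda>t. t * integral\<^sup>L M (\<lambda>\<omega>. ?l (Z t \<omega>))) \<longlongrightarrow> integral\<^sup>L mu ?l) at_top"
      using vague_U[OF mu v k, of 1 "1+\<epsilon>"] e by simp
    then have ev2: "\<forall>\<^sub>F t in at_top. integral\<^sup>L mu ?l - \<epsilon> < t * integral\<^sup>L M (\<lambda>\<omega>. ?l (Z t \<omega>))"
      using e by (intro order_tendstoD) auto
    have Il: "G/(1+\<epsilon>) \<le> integral\<^sup>L mu ?l"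
      using int_U_lower[OF mu k, of 1 "1+\<epsilon>"] e measure_Eset_scale[OF mu, of "1+\<epsilon>" k] unfolding G_def by simp
    have le2: "integral\<^sup>L M (\<lambda>\<omega>. ?l (Z t \<omega>)) \<le> measure M (A t)" for t
      unfolding Pint using Iint Uint
    proof (intro integral_mono)
      fix \<omega> assume "\<omega> \<in> space M"
      then show "?l (Z t \<omega>) \<le> indicator (A t) \<omega>"
        using ind_eq U_le_ind[of 1 "1+\<epsilon>" k "Z t \<omega>"] e by simp
    qed
    have lo: "\<forall>\<^sub>F t in at_top. G/(1+\<epsilon>) - \<epsilon> \<le> t * measure M (A t)"
      using ev2 eventually_ge_at_top[of 0]
    proof eventually_elim
      case (elim t)
      then have "t * integral\<^sup>L M (\<lambda>\<omega>. ?l (Z t \<omega>)) \<le> t * measure M (A t)"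
        using le2 by (intro mult_left_mono) auto
      then show ?case using elim Il by linarith
    qed
    show "(\<forall>\<^sub>F t in at_top. t * measure M (A t) \<le> G/(1-\<epsilon>) + \<epsilon>) \<and>
          (\<forall>\<^sub>F t in at_top. G/(1+\<epsilon>) - \<epsilon> \<le> t * measure M (A t))" using up lo by blast
  qed
qed

definition rs :: "('d::finite \<Rightarrow> ennreal) \<Rightarrow> ennreal" where "rs y = (\<Sum>j\<in>UNIV. y j)"
definition wv :: "('d::finite \<Rightarrow> ennreal) \<Rightarrow> ('d \<Rightarrow> real)" where "wv y = (\<lambda>j. enn2real (y j / rs y))"

lemma H_eq:
  assumes mu: "exponent_measure mu" and H: "spectral_measure_of mu H" and B: "B \<in> sets borel"
  shows "emeasure H B = emeasure mu {y::'d::finite \<Rightarrow> ennreal. 1 < rs y \<and> wv y \<in> B}"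
  using H B expm_space[OF mu] unfolding spectral_measure_of_def rs_def wv_def by auto

lemma wv_bounds: "0 \<le> wv y j" "wv y j \<le> 1"
proof -
  show "0 \<le> wv y j" unfolding wv_def by simp
  show "wv y j \<le> 1"
  proof (cases "rs y = top")
    case True then show ?thesis unfolding wv_def by (simp add: ennreal_divide_top)
  next
    case False
    have le: "y j \<le> rs y" unfolding rs_def by (rule member_le_sum) auto
    show ?thesis
    proof (cases "rs y = 0")
      case True then show ?thesis unfolding wv_def using le by simp
    next
      case False2: False
      have "y j / rs y \<le> rs y / rs y" using le by (rule divide_right_mono_ennreal)
      also have "\<dots> = 1" using False False2 by (simp add: divide_eq_1_ennreal)
      finally have "y j / rs y \<le> 1" .
      then show ?thesis unfolding wv_def using enn2real_mono[of "y j / rs y" 1] by simp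
    qed
  qed
qed

lemma rs_meas: "rs \<in> borel_measurable (borel :: ('d::finite \<Rightarrow> ennreal) measure)"
  unfolding rs_def by measurable

lemma wv_meas: "wv \<in> borel_measurable (borel :: ('d::finite \<Rightarrow> ennreal) measure)"
proof (rule measurable_coordinatewise_then_product)
  fix j
  have [measurable]: "rs \<in> borel_measurable (borel :: ('d::finite \<Rightarrow> ennreal) measure)" by (rule rs_meas)
  show "(\<lambda>y. wv y j) \<in> borel_measurable (borel :: ('d \<Rightarrow> ennreal) measure)"
    unfolding wv_def by measurable
qed

lemma rs_scale: "rs (\<lambda>j. ennreal c * y j) = ennreal c * rs y"
  unfolding rs_def by (simp add: sum_distrib_left)

lemma wv_scale: assumes "0 < c" shows "wv (\<lambda>j. ennreal c * y j) = wv y"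
proof -
  have "ennreal c * y j / (ennreal c * rs y) = y j / rs y" for j
    using divide_mult_eq[of "ennreal c" "y j" "rs y"] assms by (simp add: mult.commute)
  then show ?thesis unfolding wv_def rs_scale by simp
qed

lemma S_scale:
  assumes mu: "exponent_measure mu" and H: "spectral_measure_of mu H" and B: "B \<in> sets borel" and c: "0 < c"
  shows "emeasure mu {y::'d::finite \<Rightarrow> ennreal. ennreal c < rs y \<and> wv y \<in> B} = emeasure H B / ennreal c"
proof -
  have "emeasure mu {y::'d \<Rightarrow> ennreal. ennreal c < rs y \<and> wv y \<in> B} =
        emeasure mu {y::'d \<Rightarrow> ennreal. 1 < rs y \<and> wv y \<in> B} / ennreal c"
  proof (rule expm_scale[OF mu c])
    have [measurable]: "rs \<in> borel_measurable (borel :: ('d::finite \<Rightarrow> ennreal) measure)" by (rule rs_meas)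
    have [measurable]: "wv \<in> borel_measurable (borel :: ('d::finite \<Rightarrow> ennreal) measure)" by (rule wv_meas)
    have "{y::'d \<Rightarrow> ennreal. 1 < rs y \<and> wv y \<in> B} = {y \<in> space borel. 1 < rs y} \<inter> (wv -` B \<inter> space borel)"
      by auto
    also have "\<dots> \<in> sets borel" using B by measurable
    finally show "{y::'d \<Rightarrow> ennreal. 1 < rs y \<and> wv y \<in> B} \<in> sets borel" .
    fix y :: "'d \<Rightarrow> ennreal"
    show "(ennreal c < rs (\<lambda>j. ennreal c * y j) \<and> wv (\<lambda>j. ennreal c * y j) \<in> B) \<longleftrightarrow> (1 < rs y \<and> wv y \<in> B)"
      using ennreal_mult_less_cancel[OF c, of 1 "rs y"] by (simp add: rs_scale wv_scale[OF c])
  qed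
  then show ?thesis using H_eq[OF mu H B] by simp
qed

lemma null_top:
  assumes mu: "exponent_measure mu"
  shows "{y::'d::finite \<Rightarrow> ennreal. \<exists>j. y j = top} \<in> null_sets mu"
proof -
  have T: "emeasure mu {y::'d \<Rightarrow> ennreal. y j = top} = 0" for j
  proof -
    let ?T = "{y::'d \<Rightarrow> ennreal. y j = top}"
    have cl: "closed ?T" by (intro closed_Collect_eq continuous_on_const continuous_on_product_coordinates)
    then have "compact ?T" using closed_Int_compact[OF cl compact_UNIV_fun] by simp
    then have fin: "emeasure mu ?T < \<infinity>" using expm_finite[OF mu] by auto
    have "emeasure mu ?T = emeasure mu ?T / ennreal 2"
      using expm_scale[OF mu, of 2 "\<lambda>y. y j = top" "\<lambda>y. y j = top"] borel_closed[OF cl]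
      by (simp add: ennreal_mult_eq_top_iff)
    moreover obtain x where x: "emeasure mu ?T = ennreal x" "0 \<le> x"
      using fin by (cases "emeasure mu ?T") auto
    ultimately have "ennreal x = ennreal (x / 2)" using divide_ennreal[of x 2] by simp
    then have "x = 0" using x(2) by (simp add: ennreal_inj)
    then show ?thesis using x by simp
  qed
  have "{y::'d \<Rightarrow> ennreal. \<exists>j. y j = top} = (\<Union>j. {y. y j = top})" by auto
  moreover have "emeasure mu (\<Union>j. {y::'d \<Rightarrow> ennreal. y j = top}) = 0"
  proof -
    have "closed {y::'d \<Rightarrow> ennreal. y j = top}" for j
      by (intro closed_Collect_eq continuous_on_const continuous_on_product_coordinates)
    then have "range (\<lambda>j. {y::'d \<Rightarrow> ennreal. y j = top}) \<subseteq> sets mu"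
      using mu borel_closed unfolding exponent_measure_def by auto
    then have "emeasure mu (\<Union>j. {y::'d \<Rightarrow> ennreal. y j = top}) \<le> (\<Sum>j\<in>UNIV. emeasure mu {y::'d \<Rightarrow> ennreal. y j = top})"
      by (intro emeasure_subadditive_finite) auto
    then show ?thesis using T by simp
  qed
  moreover have "{y::'d \<Rightarrow> ennreal. \<exists>j. y j = top} \<in> sets mu"
  proof -
    have "closed {y::'d \<Rightarrow> ennreal. \<exists>j. y j = top}"
      unfolding \<open>{y::'d \<Rightarrow> ennreal. \<exists>j. y j = top} = (\<Union>j. {y. y j = top})\<close>
      by (intro closed_UN ballI closed_Collect_eq continuous_on_const continuous_on_product_coordinates) auto
    then show ?thesis using mu borel_closed unfolding exponent_measure_def by auto
  qed
  ultimately show ?thesis by (simp add: null_sets_def)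
qed

definition Lay :: "nat \<Rightarrow> nat \<Rightarrow> real \<Rightarrow> bool" where
  "Lay n i x \<longleftrightarrow> real i / real n < x \<and> x \<le> (real i + 1) / real n"

lemma lay_uniq: assumes "0 < n" "Lay n i x" "Lay n j x" shows "i = j"
proof -
  have "real i / n < (real j + 1) / n" "real j / n < (real i + 1) / n"
    using assms unfolding Lay_def by auto
  then have "real i < real j + 1" "real j < real i + 1"
    using assms(1) by (simp_all add: divide_less_cancel)
  then show ?thesis by linarith
qed

lemma lay_exists: assumes n: "0 < n" and x: "0 < x" "x \<le> 1" shows "\<exists>i<n. Lay n i x"
proof -
  define m where "m = \<lceil>real n * x\<rceil>"
  have m1: "1 \<le> m" unfolding m_def using n x by simp
  have mn: "m \<le> n" unfolding m_def using n x by (metis ceiling_mono ceiling_of_nat mult_left_le of_nat_0_le_iff)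
  define i where "i = nat (m - 1)"
  have i: "real i = real_of_int m - 1" unfolding i_def using m1 by simp
  have "real_of_int m - 1 < real n * x" "real n * x \<le> real_of_int m" unfolding m_def
    by (simp_all add: ceiling_correct le_of_int_ceiling)
  then have "real i / n < x" "x \<le> (real i + 1) / n" using n i by (simp_all add: field_simps)
  moreover have "i < n" unfolding i_def using mn m1 by linarith
  ultimately show ?thesis unfolding Lay_def by blast
qed

lemma lay_none: assumes "0 < n" "\<not> (0 < x \<and> x \<le> 1)" "i < n" shows "\<not> Lay n i x"
proof
  assume L: "Lay n i x"
  show False
  proof (cases "x \<le> 0")
    case True
    have "0 \<le> real i / real n" by simp
    then show False using L True unfolding Lay_def by linarith
  next
    case False
    then have "1 < x" using assms(2) by auto
    have "(real i + 1) / real n \<le> 1" using assms by simp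
    then show False using L \<open>1 < x\<close> unfolding Lay_def by linarith
  qed
qed

lemma lay_sum_one:
  assumes "0 < n" "0 < x" "x \<le> 1"
  shows "(\<Sum>i<n. (if Lay n i x then 1 else 0 :: ennreal)) = 1"
proof -
  obtain i where i: "i < n" "Lay n i x" using lay_exists[OF assms] by blast
  have "\<And>j. j \<in> {..<n} \<Longrightarrow> (if Lay n j x then 1 else 0 :: ennreal) = (if j = i then 1 else 0)"
  proof -
    fix j assume "j \<in> {..<n}"
    show "(if Lay n j x then 1 else 0 :: ennreal) = (if j = i then 1 else 0)"
      using lay_uniq[OF assms(1) i(2), of j] i(2) by (cases "Lay n j x") auto
  qed
  then have "(\<Sum>j<n. (if Lay n j x then 1 else 0 :: ennreal)) = (\<Sum>j<n. (if j = i then 1 else 0))"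
    by (rule sum.cong[OF refl])
  also have "\<dots> = 1" using i(1) by (subst sum.delta) auto
  finally show ?thesis .
qed

lemma lay_sum_zero:
  assumes "0 < n" "\<not> (0 < x \<and> x \<le> 1)"
  shows "(\<Sum>i<n. (if Lay n i x then c i else 0 :: ennreal)) = 0"
proof -
  have "\<And>i. i \<in> {..<n} \<Longrightarrow> (if Lay n i x then c i else 0 :: ennreal) = 0"
    using lay_none[OF assms] by auto
  then show ?thesis by (rule sum.neutral[OF ballI])
qed

lemma lay_sum_le1:
  assumes "0 < n"
  shows "(\<Sum>i<n. (if Lay n i x then 1 else 0 :: ennreal)) \<le> 1"
  using lay_sum_one[OF assms] lay_sum_zero[OF assms, of x "\<lambda>_. 1"] by (cases "0 < x \<and> x \<le> 1") auto

lemma lay_decomp: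
  assumes "0 < n" "0 \<le> x" "x \<le> 1"
  shows "ennreal x = (\<Sum>i<n. ennreal x * (if Lay n i x then 1 else 0))"
proof (cases "x = 0")
  case True then show ?thesis by simp
next
  case False
  then have "0 < x" using assms by simp
  have "(\<Sum>i<n. ennreal x * (if Lay n i x then 1 else 0)) = ennreal x * (\<Sum>i<n. (if Lay n i x then 1 else 0))"
    by (rule sum_distrib_left[symmetric])
  also have "\<dots> = ennreal x" using lay_sum_one[OF assms(1) \<open>0 < x\<close> assms(3)] by simp
  finally show ?thesis by simp
qed

abbreviation gk :: "nat \<Rightarrow> ('d::finite \<Rightarrow> real) \<Rightarrow> real" where
  "gk k w \<equiv> ord_stat w (CARD('d) - k + 1)"

lemma g_bounds:
  assumes k: "1 \<le> k" "k \<le> CARD('d)" and w: "\<And>j. 0 \<le> w j \<and> w j \<le> (1::real)"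
  shows "0 \<le> gk k (w :: 'd::finite \<Rightarrow> real)" "gk k w \<le> 1"
proof -
  have "\<not> 1 < gk k w"
  proof
    assume "1 < gk k w"
    then have "k \<le> card {j. 1 < w j}" using ord_stat_gt_iff[OF k] by blast
    moreover have "{j. 1 < w j} = {}" using w by (auto simp: not_less)
    ultimately show False using k by simp
  qed
  then show "gk k w \<le> 1" by simp
  show "0 \<le> gk k w"
  proof (rule ccontr)
    assume "\<not> 0 \<le> gk k w"
    then have neg: "gk k w < 0" by simp
    have "{j. gk k w < w j} = UNIV" using neg w by (auto intro: less_le_trans)
    then have "gk k w < gk k w" using ord_stat_gt_iff[OF k, of "gk k w" w] k by simp
    then show False by simp
  qed
qed

lemma E_imp_rs:
  assumes "1 \<le> k" "y \<in> Eset k 1"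
  shows "1 < rs (y :: 'd::finite \<Rightarrow> ennreal)"
proof -
  have "{j. 1 < y j} \<noteq> {}"
  proof
    assume "{j. 1 < y j} = {}"
    then have "card {j. 1 < y j} = 0" by simp
    then show False using assms unfolding Eset_def by simp
  qed
  then obtain j where "1 < y j" by blast
  moreover have "y j \<le> rs y" unfolding rs_def by (rule member_le_sum) auto
  ultimately show ?thesis by simp
qed

lemma E_char:
  assumes k: "1 \<le> k" "k \<le> CARD('d)" and fin: "\<forall>j. y j \<noteq> top" and r: "1 < rs (y :: 'd::finite \<Rightarrow> ennreal)"
  shows "rs y = ennreal (enn2real (rs y))" "1 < enn2real (rs y)"
    "y \<in> Eset k 1 \<longleftrightarrow> 1 / enn2real (rs y) < gk k (wv y)"
proof -
  have rfin: "rs y \<noteq> top" unfolding rs_def using fin by simp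
  then show rR: "rs y = ennreal (enn2real (rs y))" by (simp add: ennreal_enn2real_if)
  define R where "R = enn2real (rs y)"
  have "1 < ennreal (enn2real (rs y))" using r rR by simp
  then show R1: "1 < enn2real (rs y)" by simp
  then have R0: "0 < R" unfolding R_def by simp
  have wvj: "wv y j = enn2real (y j) / R" for j
  proof -
    have yj: "ennreal (enn2real (y j)) = y j" using fin by (simp add: ennreal_enn2real_if)
    have "y j / rs y = ennreal (enn2real (y j)) / ennreal R" unfolding R_def yj by (simp add: rR[symmetric])
    also have "\<dots> = ennreal (enn2real (y j) / R)" using R0 by (simp add: divide_ennreal)
    finally show ?thesis unfolding wv_def using R0 by (simp add: enn2real_nonneg)
  qed
  have "1 < y j \<longleftrightarrow> 1 / R < wv y j" for j
  proof -
    have "y j = ennreal (enn2real (y j))" using fin by (simp add: ennreal_enn2real_if)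
    then have "1 < y j \<longleftrightarrow> 1 < ennreal (enn2real (y j))" by simp
    also have "\<dots> \<longleftrightarrow> 1 < enn2real (y j)" by simp
    also have "\<dots> \<longleftrightarrow> 1 / R < enn2real (y j) / R" using R0 by (simp add: divide_less_cancel)
    finally show ?thesis using wvj by simp
  qed
  then have "{j. 1 < y j} = {j. 1 / R < wv y j}" by auto
  then show "y \<in> Eset k 1 \<longleftrightarrow> 1 / enn2real (rs y) < gk k (wv y)"
    unfolding Eset_def using ord_stat_gt_iff[OF k, of "1/R" "wv y"] unfolding R_def by simp
qed

lemma div_ennreal_const: "0 < c \<Longrightarrow> x / ennreal c = ennreal (1/c) * x"
  by (simp add: divide_ennreal_def inverse_ennreal inverse_eq_divide mult.commute)

lemma squeeze_sum:
  fixes h :: "nat \<Rightarrow> nat \<Rightarrow> ennreal" and X Y C :: ennreal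
  assumes C: "C < \<infinity>" and hC: "\<And>n. 0 < n \<Longrightarrow> (\<Sum>i<n. h n i) \<le> C"
    and X: "\<And>n. 0 < n \<Longrightarrow> (\<Sum>i<n. ennreal (real i / n) * h n i) \<le> X \<and> X \<le> (\<Sum>i<n. ennreal ((real i + 1) / n) * h n i)"
    and Y: "\<And>n. 0 < n \<Longrightarrow> (\<Sum>i<n. ennreal (real i / n) * h n i) \<le> Y \<and> Y \<le> (\<Sum>i<n. ennreal ((real i + 1) / n) * h n i)"
  shows "X = Y"
proof -
  define Cr where "Cr = enn2real C"
  have Ce: "C = ennreal Cr" "0 \<le> Cr" using C unfolding Cr_def by (auto simp: ennreal_enn2real_if less_top)
  have hfin: "h n i \<le> C" if "0 < n" "i < n" for n i
    using hC[OF that(1)] that(2) by (meson finite_lessThan lessThan_iff member_le_sum order.trans zero_le)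
  define hr where "hr n i = enn2real (h n i)" for n i
  have he: "h n i = ennreal (hr n i)" "0 \<le> hr n i" if "0 < n" "i < n" for n i
    using hfin[OF that] C unfolding hr_def by (auto simp: ennreal_enn2real_if top_unique less_top)
  have sumconv: "(\<Sum>i<n. ennreal (c i) * h n i) = ennreal (\<Sum>i<n. c i * hr n i)" if "0 < n" "\<And>i. 0 \<le> c i" for n c
  proof -
    have "(\<Sum>i<n. ennreal (c i) * h n i) = (\<Sum>i<n. ennreal (c i * hr n i))"
      using he[OF that(1)] that(2) by (intro sum.cong) (auto simp: ennreal_mult)
    also have "\<dots> = ennreal (\<Sum>i<n. c i * hr n i)"
      using he[OF that(1)] that(2) by (intro sum_ennreal) auto
    finally show ?thesis .
  qed
  have hsum: "(\<Sum>i<n. hr n i) \<le> Cr" if "0 < n" for n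
  proof -
    have "(\<Sum>i<n. h n i) = ennreal (\<Sum>i<n. hr n i)"
      using sumconv[OF that, of "\<lambda>_. 1"] by simp
    then show ?thesis using hC[OF that] Ce by (simp add: ennreal_le_iff)
  qed
  define L where "L n = (\<Sum>i<n. (real i / n) * hr n i)" for n
  define U where "U n = (\<Sum>i<n. ((real i + 1) / n) * hr n i)" for n
  have UL: "U n - L n \<le> Cr / n" if "0 < n" for n
  proof -
    have "U n - L n = (\<Sum>i<n. hr n i / n)"
      unfolding U_def L_def sum_subtractf[symmetric] by (intro sum.cong) (auto simp: field_simps)
    also have "\<dots> = (\<Sum>i<n. hr n i) / n" by (simp add: sum_divide_distrib)
    also have "\<dots> \<le> Cr / n" using hsum[OF that] by (simp add: divide_right_mono)
    finally show ?thesis .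
  qed
  have L0: "0 \<le> L n" if "0 < n" for n unfolding L_def using he[OF that] by (auto intro!: sum_nonneg)
  have XU: "X \<le> ennreal (U 1)" using X[of 1] sumconv[of 1 "\<lambda>i. (real i + 1) / 1"] unfolding U_def by simp
  then have "X < top" using ennreal_less_top le_less_trans by blast
  then have Xf: "X = ennreal (enn2real X)" by (simp add: ennreal_enn2real_if)
  have YU: "Y \<le> ennreal (U 1)" using Y[of 1] sumconv[of 1 "\<lambda>i. (real i + 1) / 1"] unfolding U_def by simp
  then have "Y < top" using ennreal_less_top le_less_trans by blast
  then have Yf: "Y = ennreal (enn2real Y)" by (simp add: ennreal_enn2real_if)
  have bnd: "L n \<le> enn2real X \<and> enn2real X \<le> U n \<and> L n \<le> enn2real Y \<and> enn2real Y \<le> U n" if "0 < n" for n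
  proof -
    have e1: "(\<Sum>i<n. ennreal (real i / n) * h n i) = ennreal (L n)"
      using sumconv[OF that, of "\<lambda>i. real i / n"] unfolding L_def by simp
    have e2: "(\<Sum>i<n. ennreal ((real i + 1) / n) * h n i) = ennreal (U n)"
      using sumconv[OF that, of "\<lambda>i. (real i + 1) / n"] unfolding U_def by simp
    have "ennreal (L n) \<le> ennreal (enn2real X)" "ennreal (enn2real X) \<le> ennreal (U n)"
         "ennreal (L n) \<le> ennreal (enn2real Y)" "ennreal (enn2real Y) \<le> ennreal (U n)"
      using X[OF that] Y[OF that] e1 e2 Xf Yf by auto
    moreover have "0 \<le> U n" unfolding U_def using he[OF that] by (auto intro!: sum_nonneg)
    ultimately show ?thesis using L0[OF that] by (auto simp: ennreal_le_iff)
  qed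
  have diff: "\<bar>enn2real X - enn2real Y\<bar> \<le> Cr / n" if "0 < n" for n :: nat
    using bnd[OF that] UL[OF that] by linarith
  have "\<bar>enn2real X - enn2real Y\<bar> = 0"
  proof (rule ccontr)
    assume ne: "\<bar>enn2real X - enn2real Y\<bar> \<noteq> 0"
    then have pos: "0 < \<bar>enn2real X - enn2real Y\<bar>" by simp
    obtain n :: nat where n: "Cr / \<bar>enn2real X - enn2real Y\<bar> < n" using reals_Archimedean2 by blast
    then have n0: "0 < n" using Ce pos by (metis divide_nonneg_pos le_less_trans of_nat_0_less_iff)
    have "Cr < n * \<bar>enn2real X - enn2real Y\<bar>" using n pos by (simp add: divide_less_eq)
    then have "Cr / n < \<bar>enn2real X - enn2real Y\<bar>" using n0 by (simp add: divide_less_eq mult.commute)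
    with diff[OF n0] show False by simp
  qed
  then have "enn2real X = enn2real Y" by simp
  then show ?thesis using Xf Yf by metis
qed

context
  fixes mu :: "('d::finite \<Rightarrow> ennreal) measure" and H :: "('d \<Rightarrow> real) measure" and k :: nat
  assumes mu: "exponent_measure mu" and H: "spectral_measure_of mu H"
    and k1: "1 \<le> k" and kd: "k \<le> CARD('d)"
begin

lemma sets_mu: "sets mu = sets borel" using mu unfolding exponent_measure_def by simp
lemma space_mu: "space mu = UNIV" using expm_space[OF mu] .
lemma sets_H: "sets H = sets borel" using H unfolding spectral_measure_of_def by simp
lemma space_H: "space H = UNIV" using sets_H by (metis sets_eq_imp_space_eq space_borel)

lemma g_meas: "gk k \<in> borel_measurable (borel :: ('d \<Rightarrow> real) measure)"
  by (rule ord_stat_measurable) (use k1 kd in auto)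

lemma B_borel: "{w::'d \<Rightarrow> real. Lay n i (gk k w)} \<in> sets borel"
proof -
  have [measurable]: "gk k \<in> borel_measurable (borel :: ('d \<Rightarrow> real) measure)" by (rule g_meas)
  show ?thesis unfolding Lay_def by measurable
qed

lemma Ss_sets: "B \<in> sets borel \<Longrightarrow> {y::'d \<Rightarrow> ennreal. ennreal c < rs y \<and> wv y \<in> B} \<in> sets mu"
proof -
  assume B: "B \<in> sets borel"
  have [measurable]: "rs \<in> borel_measurable (borel :: ('d::finite \<Rightarrow> ennreal) measure)" by (rule rs_meas)
  have [measurable]: "wv \<in> borel_measurable (borel :: ('d::finite \<Rightarrow> ennreal) measure)" by (rule wv_meas)
  have "{y::'d \<Rightarrow> ennreal. ennreal c < rs y \<and> wv y \<in> B} = {y \<in> space borel. ennreal c < rs y} \<inter> (wv -` B \<inter> space borel)"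
    by auto
  also have "\<dots> \<in> sets borel" using B by measurable
  finally show ?thesis using sets_mu by simp
qed

lemma E_sets: "Eset k c \<in> sets mu" using Eset_borel sets_mu by simp

lemma H_UNIV_finite: "emeasure H UNIV < \<infinity>"
proof -
  have "emeasure H UNIV = emeasure mu {y::'d \<Rightarrow> ennreal. 1 < rs y \<and> wv y \<in> UNIV}"
    by (rule H_eq[OF mu H]) simp
  also have "\<dots> \<le> emeasure mu {y. 1 \<le> rs y}"
  proof (rule emeasure_mono)
    show "{y::'d \<Rightarrow> ennreal. 1 < rs y \<and> wv y \<in> UNIV} \<subseteq> {y. 1 \<le> rs y}" by auto
    have "closed {y::'d \<Rightarrow> ennreal. 1 \<le> rs y}" unfolding rs_def
      by (intro closed_Collect_le continuous_on_const continuous_on_sum continuous_on_product_coordinates)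
    then show "{y::'d \<Rightarrow> ennreal. 1 \<le> rs y} \<in> sets mu" using sets_mu borel_closed by auto
  qed
  also have "\<dots> < \<infinity>"
  proof (rule expm_finite[OF mu])
    have "closed {y::'d \<Rightarrow> ennreal. 1 \<le> rs y}" unfolding rs_def
      by (intro closed_Collect_le continuous_on_const continuous_on_sum continuous_on_product_coordinates)
    then show "compact {y::'d \<Rightarrow> ennreal. 1 \<le> rs y}"
      using closed_Int_compact[OF _ compact_UNIV_fun] by auto
    show "(\<lambda>_. 0) \<notin> {y::'d \<Rightarrow> ennreal. 1 \<le> rs y}" unfolding rs_def by simp
  qed
  finally show ?thesis .
qed

lemma gw_bounds: "0 \<le> gk k (wv (y::'d \<Rightarrow> ennreal))" "gk k (wv y) \<le> 1"
  using g_bounds[OF k1 kd, of "wv y"] wv_bounds[of y] by auto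

lemma g_AE: "AE w in H. 0 \<le> gk k w \<and> gk k w \<le> 1"
proof (rule AE_I')
  let ?N = "{w::'d \<Rightarrow> real. \<not> (0 \<le> gk k w \<and> gk k w \<le> 1)}"
  have [measurable]: "gk k \<in> borel_measurable (borel :: ('d \<Rightarrow> real) measure)" by (rule g_meas)
  have Nb: "?N \<in> sets borel" by measurable
  have "emeasure H ?N = emeasure mu {y. 1 < rs y \<and> wv y \<in> ?N}" by (rule H_eq[OF mu H Nb])
  also have "{y. 1 < rs y \<and> wv y \<in> ?N} = {}"
    using gw_bounds by auto
  finally have "emeasure H ?N = 0" by simp
  then show "?N \<in> null_sets H" using Nb sets_H by (simp add: null_sets_def)
  show "{w \<in> space H. \<not> (0 \<le> gk k w \<and> gk k w \<le> 1)} \<subseteq> ?N" by auto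
qed


lemma N_null: "{y::'d \<Rightarrow> ennreal. \<exists>j. y j = top} \<in> null_sets mu" by (rule null_top[OF mu])

lemma gw_meas: "(\<lambda>y. gk k (wv y)) \<in> borel_measurable (borel :: ('d \<Rightarrow> ennreal) measure)"
  using g_meas wv_meas by (rule measurable_compose[rotated])

lemma A_sets: "{y \<in> Eset k 1. Lay n i (gk k (wv y))} \<in> sets mu"
proof -
  have [measurable]: "(\<lambda>y. gk k (wv y)) \<in> borel_measurable (borel :: ('d \<Rightarrow> ennreal) measure)" by (rule gw_meas)
  have "{y \<in> Eset k 1. Lay n i (gk k (wv y))} = Eset k 1 \<inter> {y \<in> space borel. Lay n i (gk k (wv (y::'d \<Rightarrow> ennreal)))}"
    by auto
  also have "\<dots> \<in> sets borel" using Eset_borel unfolding Lay_def by measurable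
  finally show ?thesis using sets_mu by simp
qed

lemma E_pos:
  assumes "\<forall>j. y j \<noteq> top" "y \<in> Eset k 1"
  shows "0 < gk k (wv (y::'d \<Rightarrow> ennreal))"
proof -
  have r: "1 < rs y" using E_imp_rs[OF k1 assms(2)] .
  have "1 / enn2real (rs y) < gk k (wv y)" using E_char[OF k1 kd assms(1) r] assms(2) by blast
  moreover have "0 < 1 / enn2real (rs y)" using E_char(2)[OF k1 kd assms(1) r] by simp
  ultimately show ?thesis by linarith
qed

lemma mu_decomp:
  assumes n: "0 < n"
  shows "emeasure mu (Eset k 1) = (\<Sum>i<n. emeasure mu {y \<in> Eset k 1. Lay n i (gk k (wv y))})"
proof -
  have "emeasure mu (Eset k 1) = (\<integral>\<^sup>+ y. indicator (Eset k 1) y \<partial>mu)"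
    using E_sets by simp
  also have "\<dots> = (\<integral>\<^sup>+ y. (\<Sum>i<n. indicator {y \<in> Eset k 1. Lay n i (gk k (wv y))} y) \<partial>mu)"
  proof (rule nn_integral_cong_AE)
    show "AE y in mu. indicator (Eset k 1) y = (\<Sum>i<n. indicator {y \<in> Eset k 1. Lay n i (gk k (wv y))} y :: ennreal)"
    proof (rule AE_I'[OF N_null], safe)
      fix y :: "'d \<Rightarrow> ennreal"
      assume ne: "indicator (Eset k 1) y \<noteq> (\<Sum>i<n. indicator {y \<in> Eset k 1. Lay n i (gk k (wv y))} y :: ennreal)"
      show "\<exists>j. y j = top"
      proof (rule ccontr)
        assume "\<not> (\<exists>j. y j = top)"
        then have fin: "\<forall>j. y j \<noteq> top" by simp
        have eq: "(\<Sum>i<n. indicator {y \<in> Eset k 1. Lay n i (gk k (wv y))} y :: ennreal) =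
              (\<Sum>i<n. indicator (Eset k 1) y * (if Lay n i (gk k (wv y)) then 1 else 0))"
          by (intro sum.cong) (auto simp: indicator_def)
        show False
        proof (cases "y \<in> Eset k 1")
          case True
          have "(\<Sum>i<n. (if Lay n i (gk k (wv y)) then 1 else 0 :: ennreal)) = 1"
            using lay_sum_one[OF n E_pos[OF fin True] gw_bounds(2)] .
          then show False using ne True eq by simp
        next
          case False
          then show False using ne eq by simp
        qed
      qed
    qed
  qed
  also have "\<dots> = (\<Sum>i<n. (\<integral>\<^sup>+ y. indicator {y \<in> Eset k 1. Lay n i (gk k (wv y))} y \<partial>mu))"
    using A_sets by (intro nn_integral_sum) auto
  also have "\<dots> = (\<Sum>i<n. emeasure mu {y \<in> Eset k 1. Lay n i (gk k (wv y))})"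
    using A_sets by (intro sum.cong) auto
  finally show ?thesis .
qed

lemma emeasure_le_null:
  assumes "A \<subseteq> C \<union> N" "C \<in> sets mu" "N \<in> null_sets mu"
  shows "emeasure mu A \<le> emeasure mu C"
proof -
  have "emeasure mu A \<le> emeasure mu (C \<union> N)"
    using assms sets_mu by (intro emeasure_mono) (auto simp: space_mu)
  also have "\<dots> \<le> emeasure mu C + emeasure mu N"
    using assms by (intro emeasure_subadditive) auto
  also have "emeasure mu N = 0" using assms(3) by auto
  finally show ?thesis by simp
qed

lemma mu_upper:
  assumes n: "0 < n" and i: "i < n"
  shows "emeasure mu {y \<in> Eset k 1. Lay n i (gk k (wv y))} \<le>
         ennreal ((real i + 1) / n) * emeasure H {w. Lay n i (gk k w)}"
proof -
  let ?c = "real n / (real i + 1)"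
  have c: "0 < ?c" using n by simp
  have "emeasure mu {y \<in> Eset k 1. Lay n i (gk k (wv y))} \<le>
        emeasure mu {y. ennreal ?c < rs y \<and> wv y \<in> {w. Lay n i (gk k w)}}"
  proof (rule emeasure_le_null[OF _ Ss_sets[OF B_borel] N_null], intro subsetI)
    fix y :: "'d \<Rightarrow> ennreal"
    assume yA: "y \<in> {y \<in> Eset k 1. Lay n i (gk k (wv y))}"
    show "y \<in> {y. ennreal ?c < rs y \<and> wv y \<in> {w. Lay n i (gk k w)}} \<union> {y. \<exists>j. y j = top}"
    proof (cases "\<forall>j. y j \<noteq> top")
    case False then show ?thesis by auto
    next
    case fin: True
    have E: "y \<in> Eset k 1" and L: "Lay n i (gk k (wv y))" using yA by auto
    have r: "1 < rs y" using E_imp_rs[OF k1 E] .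
    define R where "R = enn2real (rs y)"
    have R: "rs y = ennreal R" "1 < R" using E_char[OF k1 kd fin r] unfolding R_def by auto
    have "1 / R < gk k (wv y)" using E_char(3)[OF k1 kd fin r] E unfolding R_def by blast
    also have "\<dots> \<le> (real i + 1) / n" using L unfolding Lay_def by simp
    finally have "1 / R < (real i + 1) / n" .
    then have "?c < R" using R n by (simp add: field_simps)
    then have "ennreal ?c < rs y" using R c by (simp add: ennreal_less_iff)
    then show ?thesis using L by simp
    qed
  qed
  also have "\<dots> = emeasure H {w. Lay n i (gk k w)} / ennreal ?c"
    by (rule S_scale[OF mu H B_borel c])
  also have "\<dots> = ennreal ((real i + 1) / n) * emeasure H {w. Lay n i (gk k w)}"
    using c by (simp add: div_ennreal_const)
  finally show ?thesis .
qed

lemma mu_lower: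
  assumes n: "0 < n" and i: "i < n"
  shows "ennreal (real i / n) * emeasure H {w. Lay n i (gk k w)} \<le>
         emeasure mu {y \<in> Eset k 1. Lay n i (gk k (wv y))}"
proof (cases "i = 0")
  case True then show ?thesis by simp
next
  case False
  then have i0: "0 < i" by simp
  let ?c = "real n / real i"
  have c: "0 < ?c" using n i0 by simp
  have c1: "1 \<le> ?c" using i i0 by simp
  have "ennreal (real i / n) * emeasure H {w. Lay n i (gk k w)} = emeasure H {w. Lay n i (gk k w)} / ennreal ?c"
    using c by (simp add: div_ennreal_const)
  also have "\<dots> = emeasure mu {y. ennreal ?c < rs y \<and> wv y \<in> {w. Lay n i (gk k w)}}"
    by (rule S_scale[OF mu H B_borel c, symmetric])
  also have "\<dots> \<le> emeasure mu {y \<in> Eset k 1. Lay n i (gk k (wv y))}"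
  proof (rule emeasure_le_null[OF _ A_sets N_null], intro subsetI)
    fix y :: "'d \<Rightarrow> ennreal"
    assume yS: "y \<in> {y. ennreal ?c < rs y \<and> wv y \<in> {w. Lay n i (gk k w)}}"
    show "y \<in> {y \<in> Eset k 1. Lay n i (gk k (wv y))} \<union> {y. \<exists>j. y j = top}"
    proof (cases "\<forall>j. y j \<noteq> top")
    case False then show ?thesis by auto
    next
    case fin: True
    have rc: "ennreal ?c < rs y" and L: "Lay n i (gk k (wv y))" using yS by auto
    have "1 \<le> ennreal ?c" using c1 by simp
    then have r: "1 < rs y" using rc by (rule le_less_trans)
    define R where "R = enn2real (rs y)"
    have R: "rs y = ennreal R" "1 < R" using E_char[OF k1 kd fin r] unfolding R_def by auto
    have "?c < R" using rc R by (simp add: ennreal_less_iff)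
    then have "1 / R < real i / n" using n i0 R by (simp add: field_simps)
    also have "\<dots> < gk k (wv y)" using L unfolding Lay_def by simp
    finally have "1 / R < gk k (wv y)" .
    then have "y \<in> Eset k 1" using E_char(3)[OF k1 kd fin r] unfolding R_def by blast
    then show ?thesis using L by simp
    qed
  qed
  finally show ?thesis .
qed

lemma B_sets_H: "{w::'d \<Rightarrow> real. Lay n i (gk k w)} \<in> sets H" using B_borel sets_H by simp

lemma g_measH: "gk k \<in> borel_measurable H"
  using g_meas sets_H by (simp cong: measurable_cong_sets)

lemma H_decomp:
  assumes n: "0 < n"
  shows "(\<integral>\<^sup>+ w. ennreal (gk k w) \<partial>H) = (\<Sum>i<n. \<integral>\<^sup>+ w. ennreal (gk k w) * indicator {w. Lay n i (gk k w)} w \<partial>H)"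
proof -
  have "(\<integral>\<^sup>+ w. ennreal (gk k w) \<partial>H) = (\<integral>\<^sup>+ w. (\<Sum>i<n. ennreal (gk k w) * indicator {w. Lay n i (gk k w)} w) \<partial>H)"
  proof (rule nn_integral_cong_AE)
    show "AE w in H. ennreal (gk k w) = (\<Sum>i<n. ennreal (gk k w) * indicator {w. Lay n i (gk k w)} w)"
      using g_AE
    proof eventually_elim
      case (elim w)
      then have "ennreal (gk k w) = (\<Sum>i<n. ennreal (gk k w) * (if Lay n i (gk k w) then 1 else 0))"
        using lay_decomp[OF n] by blast
      also have "\<dots> = (\<Sum>i<n. ennreal (gk k w) * indicator {w. Lay n i (gk k w)} w)"
        by (intro sum.cong) (auto simp: indicator_def)
      finally show ?case .
    qed
  qed
  also have "\<dots> = (\<Sum>i<n. \<integral>\<^sup>+ w. ennreal (gk k w) * indicator {w. Lay n i (gk k w)} w \<partial>H)"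
    using g_measH B_sets_H by (intro nn_integral_sum) auto
  finally show ?thesis .
qed

lemma H_upper:
  "(\<integral>\<^sup>+ w. ennreal (gk k w) * indicator {w. Lay n i (gk k w)} w \<partial>H) \<le>
   ennreal ((real i + 1) / n) * emeasure H {w. Lay n i (gk k w)}"
proof -
  have "(\<integral>\<^sup>+ w. ennreal (gk k w) * indicator {w. Lay n i (gk k w)} w \<partial>H) \<le>
        (\<integral>\<^sup>+ w. ennreal ((real i + 1) / n) * indicator {w. Lay n i (gk k w)} w \<partial>H)"
    by (intro nn_integral_mono) (auto simp: indicator_def Lay_def ennreal_leI)
  also have "\<dots> = ennreal ((real i + 1) / n) * emeasure H {w. Lay n i (gk k w)}"
    using nn_integral_cmult_indicator[OF B_sets_H] by simp
  finally show ?thesis .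
qed

lemma H_lower:
  "ennreal (real i / n) * emeasure H {w. Lay n i (gk k w)} \<le>
   (\<integral>\<^sup>+ w. ennreal (gk k w) * indicator {w. Lay n i (gk k w)} w \<partial>H)"
proof -
  have "ennreal (real i / n) * emeasure H {w. Lay n i (gk k w)} =
        (\<integral>\<^sup>+ w. ennreal (real i / n) * indicator {w. Lay n i (gk k w)} w \<partial>H)"
    using nn_integral_cmult_indicator[OF B_sets_H] by simp
  also have "\<dots> \<le> (\<integral>\<^sup>+ w. ennreal (gk k w) * indicator {w. Lay n i (gk k w)} w \<partial>H)"
    by (intro nn_integral_mono) (auto simp: indicator_def Lay_def ennreal_leI)
  finally show ?thesis .
qed

lemma H_sum_le:
  assumes n: "0 < n"
  shows "(\<Sum>i<n. emeasure H {w. Lay n i (gk k w)}) \<le> emeasure H UNIV"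
proof -
  have "(\<Sum>i<n. emeasure H {w. Lay n i (gk k w)}) = (\<Sum>i<n. \<integral>\<^sup>+ w. indicator {w. Lay n i (gk k w)} w \<partial>H)"
    using B_sets_H by (intro sum.cong) auto
  also have "\<dots> = (\<integral>\<^sup>+ w. (\<Sum>i<n. indicator {w. Lay n i (gk k w)} w) \<partial>H)"
    using B_sets_H by (intro nn_integral_sum[symmetric]) auto
  also have "\<dots> \<le> (\<integral>\<^sup>+ w. 1 \<partial>H)"
  proof (intro nn_integral_mono)
    fix w
    have "(\<Sum>i<n. indicator {w. Lay n i (gk k w)} w :: ennreal) = (\<Sum>i<n. (if Lay n i (gk k w) then 1 else 0))"
      by (intro sum.cong) (auto simp: indicator_def)
    also have "\<dots> \<le> 1" by (rule lay_sum_le1[OF n])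
    finally show "(\<Sum>i<n. indicator {w. Lay n i (gk k w)} w :: ennreal) \<le> 1" .
  qed
  also have "\<dots> = emeasure H UNIV" using space_H by simp
  finally show ?thesis .
qed

lemma H_identity: "measure mu (Eset k 1) = integral\<^sup>L H (gk k)"
proof -
  let ?h = "\<lambda>n i. emeasure H {w. Lay n i (gk k w)}"
  have "emeasure mu (Eset k 1) = (\<integral>\<^sup>+ w. ennreal (gk k w) \<partial>H)"
  proof (rule squeeze_sum[where h="?h" and C="emeasure H UNIV"])
    show "emeasure H UNIV < \<infinity>" by (rule H_UNIV_finite)
    show "\<And>n. 0 < n \<Longrightarrow> (\<Sum>i<n. ?h n i) \<le> emeasure H UNIV" by (rule H_sum_le)
    fix n :: nat assume n: "0 < n"
    show "(\<Sum>i<n. ennreal (real i / n) * ?h n i) \<le> emeasure mu (Eset k 1) \<and>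
          emeasure mu (Eset k 1) \<le> (\<Sum>i<n. ennreal ((real i + 1) / n) * ?h n i)"
      unfolding mu_decomp[OF n] using mu_lower[OF n] mu_upper[OF n]
      by (auto intro!: sum_mono)
    show "(\<Sum>i<n. ennreal (real i / n) * ?h n i) \<le> (\<integral>\<^sup>+ w. ennreal (gk k w) \<partial>H) \<and>
          (\<integral>\<^sup>+ w. ennreal (gk k w) \<partial>H) \<le> (\<Sum>i<n. ennreal ((real i + 1) / n) * ?h n i)"
      unfolding H_decomp[OF n] using H_lower H_upper
      by (auto intro!: sum_mono)
  qed
  moreover have "integral\<^sup>L H (gk k) = enn2real (\<integral>\<^sup>+ w. ennreal (gk k w) \<partial>H)"
    using g_measH g_AE by (intro integral_eq_nn_integral) (auto elim: eventually_mono)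
  ultimately show ?thesis by (simp add: measure_def)
qed
end
lemma ord_stat_int:
  assumes mu: "exponent_measure mu" and H: "spectral_measure_of mu H" and i: "1 \<le> i" "i \<le> CARD('d)"
  shows "integrable H (\<lambda>w::'d::finite \<Rightarrow> real. ord_stat w i)"
proof -
  define k' where "k' = CARD('d) - i + 1"
  have k': "1 \<le> k'" "k' \<le> CARD('d)" using i unfolding k'_def by auto
  have ii: "CARD('d) - k' + 1 = i" using i unfolding k'_def by auto
  have fin: "finite_measure H"
    using H_UNIV_finite[OF mu H k'] space_H[OF mu H k'] by (intro finite_measureI) auto
  show ?thesis
  proof (rule finite_measure.integrable_const_bound[OF fin, where B=1])
    show "AE w in H. norm (ord_stat w i) \<le> 1"
      using g_AE[OF mu H k'] unfolding ii by (auto elim: eventually_mono)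
    show "(\<lambda>w. ord_stat w i) \<in> borel_measurable H"
      using g_measH[OF mu H k'] unfolding ii .
  qed
qed

lemma count_identity:
  assumes "n \<le> d"
  shows "(real n - real k) * (if k \<le> n then 1 else 0) = (\<Sum>m\<in>{k+1..d}. (if m \<le> n then 1 else 0 :: real))"
proof -
  have "(\<Sum>m\<in>{k+1..d}. (if m \<le> n then 1 else 0 :: real)) = real (card {m\<in>{k+1..d}. m \<le> n})"
    by (simp add: sum.If_cases Int_def)
  also have "{m\<in>{k+1..d}. m \<le> n} = {k+1..n}" using assms by auto
  finally show ?thesis by (cases "k \<le> n") auto
qed

theorem mainTheorem6:
  fixes M :: "'a measure" and X :: "'a \<Rightarrow> 'd::finite \<Rightarrow> real"
    and F :: "'d \<Rightarrow> real \<Rightarrow> real"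
    and mu :: "('d \<Rightarrow> ennreal) measure" and H :: "('d \<Rightarrow> real) measure"
  defines "Y \<equiv> (\<lambda>\<omega> j. 1 / ennreal (1 - F j (X \<omega> j)))"
    and "N \<equiv> (\<lambda>t \<omega>. \<Sum>j\<in>UNIV. (if F j (X \<omega> j) > 1 - 1 / t then 1 else 0 :: nat))"
  assumes prob: "prob_space M"
    and rv: "\<And>j. (\<lambda>\<omega>. X \<omega> j) \<in> borel_measurable M"
    and F_def: "\<And>j x. F j x = measure M {\<omega> \<in> space M. X \<omega> j \<le> x}"
    and F_cont: "\<And>j. continuous_on UNIV (F j)"
    and mu: "exponent_measure mu"
    and vague: "vague_conv_E
                  (\<lambda>t f. t * integral\<^sup>L M (\<lambda>\<omega>. f (\<lambda>j. Y \<omega> j / ennreal t))) mu"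
    and H: "spectral_measure_of mu H"
  shows "(\<forall>k\<in>{1..CARD('d)}.
            ((\<lambda>t. t * measure M {\<omega> \<in> space M. N t \<omega> \<ge> k})
               \<longlongrightarrow> integral\<^sup>L H (\<lambda>w. ord_stat w (CARD('d) - k + 1))) at_top)
       \<and> ((\<lambda>t. t * measure M {\<omega> \<in> space M. N t \<omega> \<ge> 1})
               \<longlongrightarrow> integral\<^sup>L H (\<lambda>w. Max (range w))) at_top
       \<and> ((\<lambda>t. t * measure M {\<omega> \<in> space M. N t \<omega> = CARD('d)})
               \<longlongrightarrow> integral\<^sup>L H (\<lambda>w. Min (range w))) at_top
       \<and> (\<forall>k\<in>{1..<CARD('d)}.
            integral\<^sup>L H (\<lambda>w. ord_stat w (CARD('d) - k + 1)) > 0 \<longrightarrow>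
            ((\<lambda>t. integral\<^sup>L M (\<lambda>\<omega>. (real (N t \<omega>) - real k)
                      * indicator {\<omega>. N t \<omega> \<ge> k} \<omega>)
                   / measure M {\<omega> \<in> space M. N t \<omega> \<ge> k})
               \<longlongrightarrow> integral\<^sup>L H (\<lambda>w. \<Sum>i=1..CARD('d) - k. ord_stat w i)
                   / integral\<^sup>L H (\<lambda>w. ord_stat w (CARD('d) - k + 1))) at_top)"
proof -
  interpret P: prob_space M by (rule prob)
  have F01: "0 \<le> F j x \<and> F j x \<le> 1" for j x
    using F_def[of j x] P.prob_le_1 by simp
  have Ncard: "N t \<omega> = card {j. 1 - 1 / t < F j (X \<omega> j)}" for t \<omega>
    unfolding N_def by (simp add: sum.If_cases)
  have NY: "N t \<omega> = card {j. 1 < Y \<omega> j / ennreal t}" if t: "0 < t" for t \<omega>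
  proof -
    have "{j. 1 - 1 / t < F j (X \<omega> j)} = {j. 1 < Y \<omega> j / ennreal t}"
      using Y_gt_iff[OF _ _ t] F01 unfolding Y_def by auto
    then show ?thesis using Ncard by simp
  qed
  have Nle: "N t \<omega> \<le> CARD('d)" for t \<omega>
    unfolding Ncard by (rule card_mono) auto
  have Fm [measurable]: "F j \<in> borel_measurable borel" for j
    using F_cont by (rule borel_measurable_continuous_onI)
  have Xm [measurable]: "(\<lambda>\<omega>. X \<omega> j) \<in> borel_measurable M" for j by (rule rv)
  have Nmeas: "{\<omega> \<in> space M. m \<le> N t \<omega>} \<in> sets M" for m t
  proof -
    have "Measurable.pred M (\<lambda>\<omega>. m \<le> card {j. 1 - 1 / t < F j (X \<omega> j)})"
      by (rule meas_card) measurable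
    then show ?thesis unfolding Ncard by (simp add: pred_def)
  qed
  have conv: "((\<lambda>t. t * measure M {\<omega> \<in> space M. k \<le> N t \<omega>}) \<longlongrightarrow> integral\<^sup>L H (gk k)) at_top"
    if k: "1 \<le> k" "k \<le> CARD('d)" for k
  proof -
    have Ym: "(\<lambda>\<omega>. Y \<omega> j / ennreal t) \<in> borel_measurable M" for t j
      unfolding Y_def using Y_meas[OF rv F_cont] .
    have c: "((\<lambda>t. t * measure M {\<omega> \<in> space M. k \<le> card {j. 1 < Y \<omega> j / ennreal t}})
              \<longlongrightarrow> measure mu (Eset k 1 :: ('d \<Rightarrow> ennreal) set)) at_top"
      using conv_main[OF prob _ mu vague k(1)] Ym by simp
    have ev: "\<forall>\<^sub>F t in at_top. t * measure M {\<omega> \<in> space M. k \<le> card {j. 1 < Y \<omega> j / ennreal t}} =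
                 t * measure M {\<omega> \<in> space M. k \<le> N t \<omega>}"
      using eventually_gt_at_top[of 0] by eventually_elim (simp add: NY)
    show ?thesis using Lim_transform_eventually[OF c ev] H_identity[OF mu H k] by simp
  qed
  have c1: "((\<lambda>t. t * measure M {\<omega> \<in> space M. 1 \<le> N t \<omega>}) \<longlongrightarrow> integral\<^sup>L H (\<lambda>w. Max (range w))) at_top"
  proof -
    have "CARD('d) - 1 + 1 = CARD('d)" by simp
    then show ?thesis using conv[of 1] by (simp add: ord_stat_max)
  qed
  have c2: "((\<lambda>t. t * measure M {\<omega> \<in> space M. N t \<omega> = CARD('d)}) \<longlongrightarrow> integral\<^sup>L H (\<lambda>w. Min (range w))) at_top"
  proof -
    have "{\<omega> \<in> space M. N t \<omega> = CARD('d)} = {\<omega> \<in> space M. CARD('d) \<le> N t \<omega>}" for t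
      using Nle by (auto intro: antisym)
    moreover have e: "\<And>w::'d \<Rightarrow> real. ord_stat w (CARD('d) - CARD('d) + 1) = Min (range w)"
      using ord_stat_min by (metis diff_self_eq_0 add_0)
    ultimately show ?thesis using conv[of "CARD('d)", unfolded e] by simp
  qed
  have c3: "((\<lambda>t. integral\<^sup>L M (\<lambda>\<omega>. (real (N t \<omega>) - real k) * indicator {\<omega>. N t \<omega> \<ge> k} \<omega>)
                   / measure M {\<omega> \<in> space M. N t \<omega> \<ge> k})
               \<longlongrightarrow> integral\<^sup>L H (\<lambda>w. \<Sum>i=1..CARD('d) - k. ord_stat w i)
                   / integral\<^sup>L H (\<lambda>w. ord_stat w (CARD('d) - k + 1))) at_top"
    if k: "k \<in> {1..<CARD('d)}" and pos: "integral\<^sup>L H (\<lambda>w. ord_stat w (CARD('d) - k + 1)) > 0" for k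
  proof -
    have numeq: "integral\<^sup>L M (\<lambda>\<omega>. (real (N t \<omega>) - real k) * indicator {\<omega>. N t \<omega> \<ge> k} \<omega>) =
          (\<Sum>m\<in>{k+1..CARD('d)}. measure M {\<omega> \<in> space M. m \<le> N t \<omega>})" for t
    proof -
      have "integral\<^sup>L M (\<lambda>\<omega>. (real (N t \<omega>) - real k) * indicator {\<omega>. N t \<omega> \<ge> k} \<omega>) =
            integral\<^sup>L M (\<lambda>\<omega>. \<Sum>m\<in>{k+1..CARD('d)}. indicator {\<omega> \<in> space M. m \<le> N t \<omega>} \<omega>)"
      proof (rule Bochner_Integration.integral_cong[OF refl])
        fix \<omega> assume om: "\<omega> \<in> space M"
        have s1: "(\<Sum>m\<in>{k+1..CARD('d)}. indicator {\<omega> \<in> space M. m \<le> N t \<omega>} \<omega>) =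
                  (\<Sum>m\<in>{k+1..CARD('d)}. if m \<le> N t \<omega> then 1 else 0 :: real)"
          using om by (intro sum.cong) (auto simp: indicator_def)
        have s2: "indicator {\<omega>. N t \<omega> \<ge> k} \<omega> = (if k \<le> N t \<omega> then 1 else (0::real))"
          by (simp add: indicator_def)
        show "(real (N t \<omega>) - real k) * indicator {\<omega>. N t \<omega> \<ge> k} \<omega> =
              (\<Sum>m\<in>{k+1..CARD('d)}. indicator {\<omega> \<in> space M. m \<le> N t \<omega>} \<omega>)"
          unfolding s1 s2 by (rule count_identity[OF Nle[of t \<omega>]])
      qed
      also have "\<dots> = (\<Sum>m\<in>{k+1..CARD('d)}. integral\<^sup>L M (indicator {\<omega> \<in> space M. m \<le> N t \<omega>}))"
        by (rule Bochner_Integration.integral_sum, rule integrable_real_indicator) (use Nmeas in \<open>auto simp: less_top[symmetric]\<close>)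
      also have "\<dots> = (\<Sum>m\<in>{k+1..CARD('d)}. measure M {\<omega> \<in> space M. m \<le> N t \<omega>})"
        using Nmeas by (intro sum.cong) (auto simp: Int_absorb2 sets.sets_into_space)
      finally show ?thesis .
    qed
    have lim_num: "((\<lambda>t. \<Sum>m\<in>{k+1..CARD('d)}. t * measure M {\<omega> \<in> space M. m \<le> N t \<omega>})
          \<longlongrightarrow> (\<Sum>m\<in>{k+1..CARD('d)}. integral\<^sup>L H (gk m))) at_top"
      using k by (intro tendsto_sum conv) auto
    have lim_den: "((\<lambda>t. t * measure M {\<omega> \<in> space M. k \<le> N t \<omega>}) \<longlongrightarrow> integral\<^sup>L H (gk k)) at_top"
      using k by (intro conv) auto
    have lim: "((\<lambda>t. (\<Sum>m\<in>{k+1..CARD('d)}. t * measure M {\<omega> \<in> space M. m \<le> N t \<omega>}) /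
                    (t * measure M {\<omega> \<in> space M. k \<le> N t \<omega>}))
          \<longlongrightarrow> (\<Sum>m\<in>{k+1..CARD('d)}. integral\<^sup>L H (gk m)) / integral\<^sup>L H (gk k)) at_top"
      using pos by (intro tendsto_divide lim_num lim_den) auto
    have ev: "\<forall>\<^sub>F t in at_top. (\<Sum>m\<in>{k+1..CARD('d)}. t * measure M {\<omega> \<in> space M. m \<le> N t \<omega>}) /
                    (t * measure M {\<omega> \<in> space M. k \<le> N t \<omega>}) =
          integral\<^sup>L M (\<lambda>\<omega>. (real (N t \<omega>) - real k) * indicator {\<omega>. N t \<omega> \<ge> k} \<omega>)
                   / measure M {\<omega> \<in> space M. N t \<omega> \<ge> k}"
      using eventually_gt_at_top[of 0]
    proof eventually_elim
      case (elim t)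
      then show ?case unfolding numeq by (simp add: sum_distrib_left[symmetric])
    qed
    have sumeq: "(\<Sum>m\<in>{k+1..CARD('d)}. integral\<^sup>L H (gk m)) = integral\<^sup>L H (\<lambda>w. \<Sum>i=1..CARD('d) - k. ord_stat w i)"
    proof -
      have "integral\<^sup>L H (\<lambda>w. \<Sum>i=1..CARD('d) - k. ord_stat w i) = (\<Sum>i=1..CARD('d) - k. integral\<^sup>L H (\<lambda>w. ord_stat w i))"
        using k by (intro Bochner_Integration.integral_sum ord_stat_int[OF mu H]) auto
      also have "\<dots> = (\<Sum>m\<in>{k+1..CARD('d)}. integral\<^sup>L H (gk m))"
        by (rule sum.reindex_bij_witness[where i="\<lambda>m. CARD('d) - m + 1" and j="\<lambda>i. CARD('d) - i + 1"])
           (use k in auto)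
      finally show ?thesis by simp
    qed
    show ?thesis using Lim_transform_eventually[OF lim ev] sumeq by simp
  qed
  show ?thesis using conv c1 c2 c3 by auto
qed


end
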